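(* There exists a function $F:\mathbb{R}\to\mathbb{R}$ whose graph, as a subspace of $\mathbb{R}^2$, is connected and dense in $\mathbb{R}^2$ and is not homeomorphic to any proper subspace of itself.
   Context: A real function is identified with its graph $\{(x,F(x)):x\in\mathbb{R}\}\subset\mathbb{R}^2$ with the subspace topology of the Euclidean plane. *)

theory Defs
  imports "HOL-Analysis.Analysis"
begin

definition graph_of :: "(real \<Rightarrow> real) \<Rightarrow> (real \<times> real) set" where
  "graph_of F = {(x, F x) | x. True}"

end

theory Submission
  imports Defs
begin
unbundle cardinal_syntax
lemma countable_card_of_nat': "countable A \<longleftrightarrow> |A| \<le>o |UNIV::nat set|"
  unfolding countable_def card_of_ordLeq[symmetric] by auto

definition small :: "real set \<Rightarrow> bool" where "small X \<longleftrightarrow> |X| <o |UNIV::real set|"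

lemma small_countable: "countable X \<Longrightarrow> small X"
  unfolding small_def
  by (metis countable_card_of_nat' uncountable_UNIV_real card_of_Well_order not_ordLeq_iff_ordLess ordLeq_transitive)

lemma small_Un: "small X \<Longrightarrow> small Y \<Longrightarrow> small (X \<union> Y)"
  unfolding small_def by (rule card_of_Un_ordLess_infinite) (auto simp: infinite_UNIV_char_0)

lemma small_subset: "small X \<Longrightarrow> Y \<subseteq> X \<Longrightarrow> small Y"
  unfolding small_def using card_of_mono1 ordLeq_ordLess_trans by blast

lemma small_vimage: "small X \<Longrightarrow> inj f \<Longrightarrow> small (f -` X)"
  unfolding small_def
proof -
  assume "|X| <o |UNIV::real set|" "inj f"
  have "|f -` X| \<le>o |X|"
    using \<open>inj f\<close> card_of_ordLeq[of "f -` X" X] by (metis inj_on_subset subset_UNIV image_vimage_subset)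
  then show "|f -` X| <o |UNIV::real set|" using \<open>|X| <o _\<close> ordLeq_ordLess_trans by blast
qed

lemma small_interval: "small X \<Longrightarrow> a < b \<Longrightarrow> \<exists>x. a < x \<and> x < b \<and> x \<notin> X"
proof (rule ccontr)
  assume s: "small X" and ab: "a < b" and n: "\<not> (\<exists>x. a < x \<and> x < b \<and> x \<notin> X)"
  then have "{a<..<b} \<subseteq> X" by auto
  then have "|{a<..<b}| \<le>o |X|" by (rule card_of_mono1)
  moreover have "|UNIV::real set| =o |{a<..<b}|"
    using open_interval_eqpoll_reals[of a b] ab eqpoll_iff_card_of_ordIso ordIso_symmetric by blast
  ultimately have "|UNIV::real set| \<le>o |X|" using ordIso_ordLeq_trans by blast
  with s show False unfolding small_def using not_ordLess_ordLeq by blast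
qed

lemma small_UN:
  assumes "small I" and "\<And>i. i \<in> J \<Longrightarrow> countable (A i)" and "|J| \<le>o |I|"
  shows "small (\<Union>i\<in>J. A i)"
proof (cases "finite J")
  case True
  then show ?thesis using assms(2) by (intro small_countable countable_UN) (auto intro: countable_finite)
next
  case False
  then have "|UNIV::nat set| \<le>o |J|" using infinite_iff_card_of_nat by blast
  then have "\<forall>i\<in>J. |A i| \<le>o |J|" using assms(2) countable_card_of_nat' ordLeq_transitive by blast
  then have "|\<Union>i\<in>J. A i| \<le>o |J|" using card_of_UNION_ordLeq_infinite[OF False] card_of_refl ordIso_iff_ordLeq by blast
  then have "|\<Union>i\<in>J. A i| \<le>o |I|" using assms(3) ordLeq_transitive by blast
  then show ?thesis using assms(1) unfolding small_def using ordLeq_ordLess_trans by blast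
qed
lemma closed_sets_card: "|{K::(real\<times>real) set. closed K}| \<le>o |UNIV::real set|"
proof -
  obtain \<B> :: "(real\<times>real) set set" where B: "countable \<B>" "\<And>C. C \<in> \<B> \<Longrightarrow> open C"
       "\<And>S. open S \<Longrightarrow> \<exists>U. U \<subseteq> \<B> \<and> S = \<Union>U"
    by (rule univ_second_countable) blast
  define \<phi> where "\<phi> K = to_nat_on \<B> ` {C\<in>\<B>. C \<subseteq> -K}" for K :: "(real\<times>real) set"
  have rep: "-K = \<Union>{C\<in>\<B>. C \<subseteq> -K}" if "closed K" for K
  proof -
    obtain U where "U \<subseteq> \<B>" "-K = \<Union>U" using B(3)[of "-K"] \<open>closed K\<close> by auto
    then show ?thesis by blast
  qed
  have "inj_on \<phi> {K. closed K}"
  proof (rule inj_onI)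
    fix K1 K2 assume K: "K1 \<in> {K. closed K}" "K2 \<in> {K. closed K}" and eq: "\<phi> K1 = \<phi> K2"
    have "{C\<in>\<B>. C \<subseteq> -K1} = {C\<in>\<B>. C \<subseteq> -K2}"
      using eq unfolding \<phi>_def using inj_on_image_eq_iff[OF inj_on_to_nat_on[OF B(1)]] by blast
    then have "-K1 = -K2" using rep[of K1] rep[of K2] K by simp
    then show "K1 = K2" by simp
  qed
  then have "|{K::(real\<times>real) set. closed K}| \<le>o |UNIV::nat set set|"
    using card_of_ordLeq[of "{K::(real\<times>real) set. closed K}" "UNIV::nat set set"] by blast
  moreover have "|UNIV::nat set set| =o |UNIV::real set|"
    using nat_sets_eqpoll_reals eqpoll_iff_card_of_ordIso by blast
  ultimately show ?thesis using ordLeq_ordIso_trans by blast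
qed
lemma kill_exists:
  fixes \<psi> :: "real \<Rightarrow> real"
  assumes D: "small D" and cont: "continuous_on UNIV \<psi>" and inj: "inj \<psi>" and nid: "\<psi> \<noteq> id"
  shows "\<exists>g::real \<Rightarrow> real option. countable (dom g) \<and> dom g \<inter> D = {} \<and>
     (\<exists>x0 xs. xs \<longlonglongrightarrow> x0 \<and> g x0 = Some 0 \<and> g (\<psi> x0) = Some 0 \<and>
        (\<forall>n. g (xs n) = Some 0 \<and> g (\<psi> (xs n)) = Some 1))"
proof -
  define E where "E = D \<union> \<psi> -` D"
  have E: "small E" unfolding E_def using D inj by (intro small_Un small_vimage)
  obtain a where a: "\<psi> a \<noteq> a" using nid by (metis eq_id_iff)
  have "open {x. \<psi> x \<noteq> x}" by (rule open_Collect_neq[OF cont continuous_on_id])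
  moreover have "a \<in> {x. \<psi> x \<noteq> x}" using a by simp
  ultimately obtain r where r: "r > 0" "ball a r \<subseteq> {x. \<psi> x \<noteq> x}"
    using open_contains_ball by blast
  obtain x0 where x0: "a - r < x0" "x0 < a + r" "x0 \<notin> E" using small_interval[OF E, of "a - r" "a + r"] r by auto
  have "x0 \<in> ball a r" using x0 by (auto simp: dist_real_def)
  then have px0: "\<psi> x0 \<noteq> x0" using r by auto
  define e where "e = \<bar>\<psi> x0 - x0\<bar>"
  have e: "e > 0" using px0 unfolding e_def by simp
  obtain d where d: "d > 0" "\<And>x'. dist x' x0 < d \<Longrightarrow> dist (\<psi> x') (\<psi> x0) < e/2"
    using cont e unfolding continuous_on_iff by (metis UNIV_I half_gt_zero)
  define \<delta> where "\<delta> = min d (e/2)"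
  have \<delta>: "\<delta> > 0" using d e unfolding \<delta>_def by auto
  have sep: "\<psi> x \<noteq> x'" if "\<bar>x - x0\<bar> < \<delta>" "\<bar>x' - x0\<bar> < \<delta>" for x x'
  proof -
    have "\<bar>\<psi> x - \<psi> x0\<bar> < e/2" using d(2)[of x] that \<delta>_def by (auto simp: dist_real_def)
    moreover have "\<delta> \<le> e/2" unfolding \<delta>_def by simp
    moreover have "\<bar>(x' - x0) - (\<psi> x - \<psi> x0)\<bar> \<le> \<bar>x' - x0\<bar> + \<bar>\<psi> x - \<psi> x0\<bar>"
      by (rule abs_triangle_ineq4)
    ultimately show ?thesis using that unfolding e_def by auto
  qed
  define lo where "lo n = x0 + \<delta> / real (Suc (Suc n))" for n
  define hi where "hi n = x0 + \<delta> / real (Suc n)" for n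
  have lohi: "lo n < hi n" for n unfolding lo_def hi_def using \<delta> by (simp add: frac_less2)
  define xs where "xs n = (SOME x. lo n < x \<and> x < hi n \<and> x \<notin> E)" for n
  have xs: "lo n < xs n \<and> xs n < hi n \<and> xs n \<notin> E" for n
    unfolding xs_def by (rule someI_ex) (use small_interval[OF E lohi[of n]] in auto)
  have hi_le: "hi n \<le> x0 + \<delta>" for n unfolding hi_def using \<delta>
    by (simp add: divide_le_eq)
  have xs_near: "\<bar>xs n - x0\<bar> < \<delta>" for n
  proof -
    have "lo n > x0" unfolding lo_def using \<delta> by simp
    then show ?thesis using xs[of n] hi_le[of n] by auto
  qed
  have xs_gt: "xs n > x0" for n
  proof -
    have "\<delta> / real (Suc (Suc n)) > 0" using \<delta> by simp
    then show ?thesis using xs[of n] unfolding lo_def by linarith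
  qed
  have "(\<lambda>n. x0 + \<delta> * inverse (real (Suc n))) \<longlonglongrightarrow> x0 + \<delta> * 0"
    by (intro tendsto_intros LIMSEQ_inverse_real_of_nat)
  then have hi_lim: "hi \<longlonglongrightarrow> x0" unfolding hi_def by (simp add: divide_inverse)
  have xs_lim: "xs \<longlonglongrightarrow> x0"
  proof (rule real_tendsto_sandwich[OF _ _ tendsto_const hi_lim])
    show "\<forall>\<^sub>F n in sequentially. x0 \<le> xs n" using xs_gt by (simp add: less_imp_le)
    show "\<forall>\<^sub>F n in sequentially. xs n \<le> hi n" using xs by (simp add: less_imp_le)
  qed
  define g where "g z = (if z = x0 \<or> z \<in> range xs \<or> z = \<psi> x0 then Some (0::real)
      else if z \<in> \<psi> ` range xs then Some 1 else None)" for z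
  have dom: "dom g = {x0, \<psi> x0} \<union> range xs \<union> \<psi> ` range xs"
    unfolding g_def dom_def by auto
  have "countable (dom g)" unfolding dom by auto
  moreover have "dom g \<inter> D = {}"
    unfolding dom using x0(3) xs unfolding E_def by auto
  moreover have "g (\<psi> (xs n)) = Some 1" for n
  proof -
    have "\<psi> (xs n) \<noteq> x0" using sep[of "xs n" x0] xs_near \<delta> by auto
    moreover have "\<psi> (xs n) \<notin> range xs" using sep xs_near by auto
    moreover have "\<psi> (xs n) \<noteq> \<psi> x0" using inj xs_gt[of n] by (auto dest: injD)
    ultimately show ?thesis unfolding g_def by auto
  qed
  moreover have "g x0 = Some 0" "g (\<psi> x0) = Some 0" "g (xs n) = Some 0" for n unfolding g_def by auto
  ultimately show ?thesis using xs_lim by blast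
qed

definition hitcond :: "(real \<times> real) set \<Rightarrow> (real \<Rightarrow> real option) \<Rightarrow> bool" where
  "hitcond K g \<longleftrightarrow> ((\<exists>e1 e2. e1 < e2 \<and> {e1..e2} \<subseteq> fst ` K) \<longrightarrow> (\<exists>x y. g x = Some y \<and> (x,y) \<in> K))"

definition killcond :: "(real \<times> real) set \<Rightarrow> (real \<Rightarrow> real option) \<Rightarrow> bool" where
  "killcond K g \<longleftrightarrow> (\<forall>\<psi>. continuous_on UNIV \<psi> \<and> inj \<psi> \<and> \<psi> \<noteq> id \<and> K = range (\<lambda>x. (x, \<psi> x)) \<longrightarrow>
     (\<exists>x0 xs. xs \<longlonglongrightarrow> x0 \<and> g x0 = Some 0 \<and> g (\<psi> x0) = Some 0 \<and>
        (\<forall>n. g (xs n) = Some 0 \<and> g (\<psi> (xs n)) = Some 1)))"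

lemma killcond_upd:
  assumes "killcond K g" "x \<notin> dom g"
  shows "killcond K (g(x \<mapsto> y))"
proof -
  have *: "(g(x \<mapsto> y)) z = Some v" if "g z = Some v" for z v
    using that assms(2) by (auto simp: dom_def)
  show ?thesis unfolding killcond_def
  proof (intro allI impI)
    fix \<psi> :: "real \<Rightarrow> real"
    assume h: "continuous_on UNIV \<psi> \<and> inj \<psi> \<and> \<psi> \<noteq> id \<and> K = range (\<lambda>x. (x, \<psi> x))"
    have "\<exists>x0 xs. xs \<longlonglongrightarrow> x0 \<and> g x0 = Some 0 \<and> g (\<psi> x0) = Some 0 \<and>
        (\<forall>n. g (xs n) = Some 0 \<and> g (\<psi> (xs n)) = Some 1)"
      using assms(1) h unfolding killcond_def by blast
    then obtain x0 xs where "xs \<longlonglongrightarrow> x0" "g x0 = Some 0" "g (\<psi> x0) = Some 0"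
        "\<And>n. g (xs n) = Some 0" "\<And>n. g (\<psi> (xs n)) = Some 1" by blast
    then show "\<exists>x0 xs. xs \<longlonglongrightarrow> x0 \<and> (g(x \<mapsto> y)) x0 = Some 0 \<and> (g(x \<mapsto> y)) (\<psi> x0) = Some 0 \<and>
        (\<forall>n. (g(x \<mapsto> y)) (xs n) = Some 0 \<and> (g(x \<mapsto> y)) (\<psi> (xs n)) = Some 1)"
      using * by blast
  qed
qed

lemma step_exists:
  assumes D: "small D"
  shows "\<exists>g. countable (dom g) \<and> dom g \<inter> D = {} \<and> hitcond K g \<and> killcond K g"
proof -
  obtain g1 where g1: "countable (dom g1)" "dom g1 \<inter> D = {}" "killcond K g1"
  proof (cases "\<exists>\<psi>. continuous_on UNIV \<psi> \<and> inj \<psi> \<and> \<psi> \<noteq> id \<and> K = range (\<lambda>x. (x, \<psi> x))")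
    case True
    then obtain \<psi> where \<psi>: "continuous_on UNIV \<psi>" "inj \<psi>" "\<psi> \<noteq> id" "K = range (\<lambda>x. (x, \<psi> x))"
      by blast
    obtain g :: "real \<Rightarrow> real option" where g0: "countable (dom g) \<and> dom g \<inter> D = {} \<and>
      (\<exists>x0 xs. xs \<longlonglongrightarrow> x0 \<and> g x0 = Some 0 \<and> g (\<psi> x0) = Some 0 \<and>
        (\<forall>n. g (xs n) = Some 0 \<and> g (\<psi> (xs n)) = Some 1))"
      by (rule exE[OF kill_exists[OF D \<psi>(1-3)]]) assumption
    note g = conjunct1[OF g0] conjunct1[OF conjunct2[OF g0]] conjunct2[OF conjunct2[OF g0]]
    have "killcond K g"
      unfolding killcond_def
    proof (intro allI impI)
      fix \<phi> assume h: "continuous_on UNIV \<phi> \<and> inj \<phi> \<and> \<phi> \<noteq> id \<and> K = range (\<lambda>x. (x, \<phi> x))"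
      have "\<phi> x = \<psi> x" for x
      proof -
        have "(x, \<phi> x) \<in> range (\<lambda>x. (x, \<psi> x))" using h \<psi>(4) by auto
        then show ?thesis by auto
      qed
      then have "\<phi> = \<psi>" by auto
      then show "\<exists>x0 xs. xs \<longlonglongrightarrow> x0 \<and> g x0 = Some 0 \<and> g (\<phi> x0) = Some 0 \<and>
        (\<forall>n. g (xs n) = Some 0 \<and> g (\<phi> (xs n)) = Some 1)" using g(3) by simp
    qed
    then show ?thesis using that g by blast
  next
    case False
    have "killcond K Map.empty" using False unfolding killcond_def by blast
    then show ?thesis by (intro that) auto
  qed
  show ?thesis
  proof (cases "\<exists>e1 e2. e1 < e2 \<and> {e1..e2} \<subseteq> fst ` K")
    case True
    then obtain e1 e2 where e: "e1 < e2" "{e1..e2} \<subseteq> fst ` K" by blast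
    have "small (D \<union> dom g1)" using D g1(1) by (blast intro: small_Un small_countable)
    then obtain x where x: "e1 < x" "x < e2" "x \<notin> D \<union> dom g1" using small_interval e(1) by blast
    then have "x \<in> fst ` K" using e(2) by (meson atLeastAtMost_iff less_imp_le subsetD)
    then obtain y where y: "(x, y) \<in> K" by force
    let ?g = "g1(x \<mapsto> y)"
    have "countable (dom ?g)" using g1(1) by simp
    moreover have "dom ?g \<inter> D = {}" using g1(2) x(3) by auto
    moreover have "hitcond K ?g" unfolding hitcond_def using y by force
    moreover have "killcond K ?g" using killcond_upd g1(3) x(3) by blast
    ultimately show ?thesis by blast
  next
    case False
    then have "hitcond K g1" unfolding hitcond_def by blast
    then show ?thesis using g1 by blast
  qed
qed
lemma small_UN':
  assumes "|J| <o |UNIV::real set|" and "\<And>i. i \<in> J \<Longrightarrow> countable (A i)"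
  shows "small (\<Union>i\<in>J. A i)"
proof (cases "finite J")
  case True
  then show ?thesis using assms(2) by (intro small_countable countable_UN) (auto intro: countable_finite)
next
  case False
  then have "|UNIV::nat set| \<le>o |J|" using infinite_iff_card_of_nat by blast
  then have "\<forall>i\<in>J. |A i| \<le>o |J|" using assms(2) countable_card_of_nat' ordLeq_transitive by blast
  then have "|\<Union>i\<in>J. A i| \<le>o |J|" using card_of_UNION_ordLeq_infinite[OF False] card_of_refl ordIso_iff_ordLeq by blast
  then show ?thesis using assms(1) unfolding small_def using ordLeq_ordLess_trans by blast
qed

definition hitprop :: "(real \<Rightarrow> real) \<Rightarrow> bool" where
  "hitprop F \<longleftrightarrow> (\<forall>K. closed K \<and> (\<exists>e1 e2. e1 < e2 \<and> {e1..e2} \<subseteq> fst ` K) \<longrightarrow> K \<inter> graph_of F \<noteq> {})"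

definition killprop :: "(real \<Rightarrow> real) \<Rightarrow> bool" where
  "killprop F \<longleftrightarrow> (\<forall>\<psi>. continuous_on UNIV \<psi> \<and> inj \<psi> \<and> \<psi> \<noteq> id \<longrightarrow>
     (\<exists>x0 xs. xs \<longlonglongrightarrow> x0 \<and> F x0 = 0 \<and> F (\<psi> x0) = 0 \<and>
        (\<forall>n. F (xs n) = 0 \<and> F (\<psi> (xs n)) = 1)))"

lemma closed_graph_cont:
  fixes \<psi> :: "real \<Rightarrow> real"
  assumes "continuous_on UNIV \<psi>"
  shows "closed (range (\<lambda>x. (x, \<psi> x)))"
proof -
  have "range (\<lambda>x. (x, \<psi> x)) = {z. snd z = \<psi> (fst z)}" by force
  moreover have "closed {z::real\<times>real. snd z = \<psi> (fst z)}"
    by (intro closed_Collect_eq continuous_intros continuous_on_compose2[OF assms]) auto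
  ultimately show ?thesis by simp
qed

lemma exists_F: "\<exists>F. hitprop F \<and> killprop F"
proof -
  define T where "T = {K::(real\<times>real) set. closed K}"
  define r where "r = |T|"
  have wo: "wo_rel r" unfolding r_def wo_rel_def by (rule card_of_Well_order)
  have Fr: "Field r = T" unfolding r_def by (rule Field_card_of)
  define P where "P D K g \<longleftrightarrow> countable (dom g) \<and> dom g \<inter> D = {} \<and> hitcond K g \<and> killcond K g"
    for D K and g :: "real \<Rightarrow> real option"
  define H where "H f K = (if \<exists>g. P (\<Union>j\<in>underS r K. dom (f j)) K g
     then SOME g. P (\<Union>j\<in>underS r K. dom (f j)) K g else Map.empty)"
    for f :: "(real\<times>real) set \<Rightarrow> real \<Rightarrow> real option" and K
  have adm: "wo_rel.adm_wo r H"
    unfolding wo_rel.adm_wo_def[OF wo]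
  proof (intro allI impI)
    fix f g :: "(real\<times>real) set \<Rightarrow> real \<Rightarrow> real option" and K
    assume "\<forall>y\<in>underS r K. f y = g y"
    then have eq: "(\<Union>j\<in>underS r K. dom (f j)) = (\<Union>j\<in>underS r K. dom (g j))" by simp
    show "H f K = H g K" unfolding H_def eq by (rule refl)
  qed
  define gg where "gg = wo_rel.worec r H"
  have fixp: "gg K = H gg K" for K unfolding gg_def using wo_rel.worec_fixpoint[OF wo adm] by metis
  have cnt: "countable (dom (gg K))" for K
  proof (cases "\<exists>g. P (\<Union>j\<in>underS r K. dom (gg j)) K g")
    case True
    then have "P (\<Union>j\<in>underS r K. dom (gg j)) K (gg K)" unfolding fixp[of K] H_def by (simp add: someI_ex)
    then show ?thesis unfolding P_def by blast
  next
    case False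
    have "gg K = Map.empty" using False unfolding fixp[of K] H_def by auto
    then show ?thesis by simp
  qed
  have TR: "|T| \<le>o |UNIV::real set|" unfolding T_def by (rule closed_sets_card)
  have good: "P (\<Union>j\<in>underS r K. dom (gg j)) K (gg K)" if "K \<in> T" for K
  proof -
    have "|underS r K| <o r" using card_of_underS[of r K] that Fr unfolding r_def
      using card_of_Card_order by blast
    then have "|underS r K| <o |UNIV::real set|" using TR unfolding r_def using ordLess_ordLeq_trans by blast
    then have "small (\<Union>j\<in>underS r K. dom (gg j))" using cnt by (intro small_UN')
    then have "\<exists>g. P (\<Union>j\<in>underS r K. dom (gg j)) K g" unfolding P_def using step_exists by blast
    then show ?thesis unfolding fixp[of K] H_def by (simp add: someI_ex)
  qed
  have disj: "dom (gg K1) \<inter> dom (gg K2) = {}" if "K1 \<in> T" "K2 \<in> T" "K1 \<noteq> K2" for K1 K2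
  proof -
    have "(K1, K2) \<in> r \<or> (K2, K1) \<in> r" using wo_rel.TOTALS[OF wo] that Fr by blast
    then have "K1 \<in> underS r K2 \<or> K2 \<in> underS r K1" using that(3) unfolding underS_def by auto
    then show ?thesis
    proof
      assume "K1 \<in> underS r K2"
      then show ?thesis using good[OF that(2)] unfolding P_def by blast
    next
      assume "K2 \<in> underS r K1"
      then show ?thesis using good[OF that(1)] unfolding P_def by blast
    qed
  qed
  define F where "F x = (if \<exists>K\<in>T. x \<in> dom (gg K) then the (gg (SOME K. K \<in> T \<and> x \<in> dom (gg K)) x) else 0)" for x
  have Fval: "F x = v" if "K \<in> T" "gg K x = Some v" for K x v
  proof -
    have ex: "\<exists>K\<in>T. x \<in> dom (gg K)" using that by blast
    define K' where "K' = (SOME K. K \<in> T \<and> x \<in> dom (gg K))"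
    have K': "K' \<in> T" "x \<in> dom (gg K')" unfolding K'_def using someI_ex[of "\<lambda>K. K \<in> T \<and> x \<in> dom (gg K)"] ex by blast+
    have "K' = K" using disj[OF K'(1) that(1)] K'(2) that(2) by blast
    then show ?thesis unfolding F_def using ex that(2) K'_def by simp
  qed
  have "hitprop F" unfolding hitprop_def
  proof (intro allI impI)
    fix K :: "(real\<times>real) set" assume K: "closed K \<and> (\<exists>e1 e2. e1 < e2 \<and> {e1..e2} \<subseteq> fst ` K)"
    then have KT: "K \<in> T" unfolding T_def by simp
    have "hitcond K (gg K)" using good[OF KT] unfolding P_def by blast
    then obtain x y where "gg K x = Some y" "(x, y) \<in> K" using K unfolding hitcond_def by blast
    then have "(x, F x) \<in> K \<inter> graph_of F" using Fval[OF KT] unfolding graph_of_def by auto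
    then show "K \<inter> graph_of F \<noteq> {}" by blast
  qed
  moreover have "killprop F" unfolding killprop_def
  proof (intro allI impI)
    fix \<psi> :: "real \<Rightarrow> real" assume h: "continuous_on UNIV \<psi> \<and> inj \<psi> \<and> \<psi> \<noteq> id"
    define K where "K = range (\<lambda>x. (x, \<psi> x))"
    have KT: "K \<in> T" unfolding T_def K_def using closed_graph_cont h by blast
    have "killcond K (gg K)" using good[OF KT] unfolding P_def by blast
    then obtain x0 xs where "xs \<longlonglongrightarrow> x0" "gg K x0 = Some 0" "gg K (\<psi> x0) = Some 0"
        "\<And>n. gg K (xs n) = Some 0" "\<And>n. gg K (\<psi> (xs n)) = Some 1"
      using h unfolding killcond_def K_def by blast
    then show "\<exists>x0 xs. xs \<longlonglongrightarrow> x0 \<and> F x0 = 0 \<and> F (\<psi> x0) = 0 \<and>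
        (\<forall>n. F (xs n) = 0 \<and> F (\<psi> (xs n)) = 1)" using Fval[OF KT] by blast
  qed
  ultimately show ?thesis by blast
qed


lemma conn_open_interval:
  fixes F :: "real \<Rightarrow> real"
  assumes hit: "hitprop F" and cd: "c < d"
  shows "connected ((\<lambda>x. (x, F x)) ` {c<..<d})"
proof (rule ccontr)
  define S where "S = (\<lambda>x. (x, F x)) ` {c<..<d}"
  assume "\<not> connected ((\<lambda>x. (x, F x)) ` {c<..<d})"
  then obtain A B where AB: "open A" "open B" "S \<subseteq> A \<union> B" "A \<inter> B \<inter> S = {}" "A \<inter> S \<noteq> {}" "B \<inter> S \<noteq> {}"
    unfolding connected_def S_def by blast
  have sep: "separatedin euclidean (S \<inter> A) (S \<inter> B)"
  proof -
    have "S \<inter> A \<inter> closure (S \<inter> B) = {}"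
    proof -
      have "A \<inter> closure (S \<inter> B) = {}" using open_Int_closure_eq_empty[OF AB(1)] AB(4) by blast
      then show ?thesis by blast
    qed
    moreover have "S \<inter> B \<inter> closure (S \<inter> A) = {}"
    proof -
      have "B \<inter> closure (S \<inter> A) = {}" using open_Int_closure_eq_empty[OF AB(2)] AB(4) by blast
      then show ?thesis by blast
    qed
    ultimately show ?thesis unfolding separatedin_def by auto
  qed
  obtain U V where UV: "openin euclidean U" "openin euclidean V" "S \<inter> A \<subseteq> U" "S \<inter> B \<subseteq> V" "disjnt U V"
    using metrizable_space_separation[OF metrizable_space_euclidean sep] by blast
  define \<Sigma> :: "(real \<times> real) set" where "\<Sigma> = {c<..<d} \<times> UNIV"
  define U' where "U' = U \<inter> \<Sigma>"
  define V' where "V' = V \<inter> \<Sigma>"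
  have oU': "open U'" "open V'" unfolding U'_def V'_def \<Sigma>_def using UV(1,2)
    by (auto simp: open_openin[symmetric] intro!: open_Int open_Times)
  have dUV: "U' \<inter> V' = {}" using UV(5) unfolding U'_def V'_def disjnt_def by blast
  have SUV: "S \<subseteq> U' \<union> V'" using AB(3) UV(3,4) unfolding U'_def V'_def \<Sigma>_def S_def by auto
  define K where "K = - (U' \<union> V')"
  have cK: "closed K" unfolding K_def using oU' by (intro closed_Compl open_Un)
  have GK: "(x, F x) \<notin> K" if "c < x" "x < d" for x
  proof -
    have "(x, F x) \<in> S" unfolding S_def using that by auto
    then show ?thesis using SUV unfolding K_def by blast
  qed
  obtain p where p: "p \<in> S \<inter> A" using AB(5) by blast
  obtain q where q: "q \<in> S \<inter> B" using AB(6) by blast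
  obtain a where a: "c < a" "a < d" "p = (a, F a)" using p unfolding S_def by auto
  obtain b where b: "c < b" "b < d" "q = (b, F b)" using q unfolding S_def by auto
  have pU: "p \<in> U'" using p UV(3) unfolding U'_def \<Sigma>_def a(3) using a by auto
  have qV: "q \<in> V'" using q UV(4) unfolding V'_def \<Sigma>_def b(3) using b by auto
  have nc: "\<not> connected_component (- K) p q"
  proof
    assume "connected_component (- K) p q"
    then obtain T where T: "connected T" "T \<subseteq> - K" "p \<in> T" "q \<in> T"
      unfolding connected_component_def by blast
    have "T \<subseteq> U' \<union> V'" using T(2) unfolding K_def by auto
    then have "U' \<inter> T = {} \<or> V' \<inter> T = {}" using connectedD[OF T(1) oU'] dUV by blast
    then show False using T(3,4) pU qV by blast
  qed
  obtain C where C: "C \<in> components K" "\<not> connected_component (- C) p q"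
    using separation_by_component_closed_pointwise[OF cK nc] by blast
  have Cconn: "connected C" using C(1) by (rule in_components_connected)
  have Ccl: "closed C" using closed_components[OF cK C(1)] .
  have CK: "C \<subseteq> K" using C(1) by (rule in_components_subset)
  have intv: "is_interval (fst ` C)"
    using Cconn by (simp add: is_interval_connected_1 connected_continuous_image continuous_on_fst continuous_on_id)
  show False
  proof (cases "\<exists>u v. u < v \<and> u \<in> fst ` C \<and> v \<in> fst ` C \<and> c < u \<and> v < d")
    case True
    then obtain u v where uv: "u < v" "u \<in> fst ` C" "v \<in> fst ` C" "c < u" "v < d" by blast
    have sub: "{u..v} \<subseteq> fst ` C" using intv uv(2,3) unfolding is_interval_1 by auto
    define K0 where "K0 = C \<inter> ({u..v} \<times> UNIV)"
    have "closed K0" unfolding K0_def using Ccl by (intro closed_Int closed_Times) auto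
    moreover have "{u..v} \<subseteq> fst ` K0"
    proof
      fix t assume t: "t \<in> {u..v}"
      then obtain z where "z \<in> C" "fst z = t" using sub by force
      then show "t \<in> fst ` K0" unfolding K0_def using t by (metis IntI UNIV_I imageI mem_Times_iff)
    qed
    ultimately have "K0 \<inter> graph_of F \<noteq> {}" using hit uv(1) unfolding hitprop_def by blast
    then obtain t where t: "(t, F t) \<in> K0" unfolding graph_of_def by blast
    then have "(t, F t) \<in> K" "c < t" "t < d" using CK uv unfolding K0_def by auto
    then show False using GK by blast
  next
    case False
    obtain x0 where x0: "c < x0" "x0 < d" "\<And>z. z \<in> C \<Longrightarrow> c < fst z \<Longrightarrow> fst z < d \<Longrightarrow> fst z = x0"
    proof (cases "\<exists>z\<in>C. c < fst z \<and> fst z < d")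
      case True
      then obtain z0 where z0: "z0 \<in> C" "c < fst z0" "fst z0 < d" by blast
      have "fst z = fst z0" if "z \<in> C" "c < fst z" "fst z < d" for z
      proof (rule ccontr)
        assume ne: "fst z \<noteq> fst z0"
        show False
        proof (cases "fst z < fst z0")
          case True
          then show False using False that z0 by blast
        next
          case False': False
          then have "fst z0 < fst z" using ne by linarith
          then show False using False that z0 by blast
        qed
      qed
      then show ?thesis using that z0 by blast
    next
      case False
      then show ?thesis using that a by blast
    qed
    define P1 where "P1 = (\<lambda>s. (a, s)) ` {min (F a) (F x0) .. max (F a) (F x0)}"
    define P2 where "P2 = (\<lambda>t. (t, F x0)) ` {min a b .. max a b}"
    define P3 where "P3 = (\<lambda>s. (b, s)) ` {min (F b) (F x0) .. max (F b) (F x0)}"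
    have cP1: "connected P1" unfolding P1_def
      by (intro connected_continuous_image connected_Icc continuous_intros)
    have cP2: "connected P2" unfolding P2_def
      by (intro connected_continuous_image connected_Icc continuous_intros)
    have cP3: "connected P3" unfolding P3_def
      by (intro connected_continuous_image connected_Icc continuous_intros)
    have m1: "(a, F x0) \<in> P1 \<inter> P2" unfolding P1_def P2_def by auto
    have m2: "(b, F x0) \<in> P2 \<inter> P3" unfolding P2_def P3_def by auto
    have cP: "connected (P1 \<union> P2 \<union> P3)"
      using connected_Un[OF connected_Un[OF cP1 cP2] cP3] m1 m2 by blast
    have pP: "p \<in> P1" unfolding P1_def a(3) by auto
    have qP: "q \<in> P3" unfolding P3_def b(3) by auto
    have disj: "(P1 \<union> P2 \<union> P3) \<inter> C = {}"
    proof (rule ccontr)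
      assume "(P1 \<union> P2 \<union> P3) \<inter> C \<noteq> {}"
      then obtain z where z: "z \<in> P1 \<union> P2 \<union> P3" "z \<in> C" by blast
      have zK: "z \<in> K" using z(2) CK by blast
      consider "z \<in> P1" | "z \<in> P2" | "z \<in> P3" using z(1) by blast
      then show False
      proof cases
        case 1
        then obtain s where s: "z = (a, s)" "s \<in> {min (F a) (F x0) .. max (F a) (F x0)}" unfolding P1_def by blast
        then have "a = x0" using x0(3)[OF z(2)] a by simp
        then have "z = (a, F a)" using s by auto
        then show False using GK a zK by blast
      next
        case 2
        then obtain t where t: "z = (t, F x0)" "t \<in> {min a b .. max a b}" unfolding P2_def by blast
        then have "c < t" "t < d" using a b by auto
        then have "t = x0" using x0(3)[OF z(2)] t by simp
        then show False using GK x0 zK t by blast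
      next
        case 3
        then obtain s where s: "z = (b, s)" "s \<in> {min (F b) (F x0) .. max (F b) (F x0)}" unfolding P3_def by blast
        then have "b = x0" using x0(3)[OF z(2)] b by simp
        then have "z = (b, F b)" using s by auto
        then show False using GK b zK by blast
      qed
    qed
    have "connected_component (- C) p q"
      unfolding connected_component_def
      using cP disj pP qP by blast
    then show False using C(2) by blast
  qed
qed


lemma dense_graph:
  fixes F :: "real \<Rightarrow> real"
  assumes hit: "hitprop F"
  shows "closure (graph_of F) = UNIV"
proof -
  have "z \<in> closure (graph_of F)" for z :: "real \<times> real"
  proof -
    obtain z1 z2 where z: "z = (z1, z2)" by (cases z)
    have "\<exists>y\<in>graph_of F. dist y z < e" if e: "e > 0" for e
    proof -
      define K where "K = cball z (e/2)"
      have "closed K" unfolding K_def by simp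
      moreover have "{z1 - e/2 .. z1 + e/2} \<subseteq> fst ` K"
      proof
        fix t assume t: "t \<in> {z1 - e/2 .. z1 + e/2}"
        have "dist z (t, z2) = \<bar>z1 - t\<bar>" unfolding z by (simp add: dist_Pair_Pair dist_real_def)
        also have "\<dots> \<le> e/2" using t by (intro abs_leI) auto
        finally have "(t, z2) \<in> K" unfolding K_def by simp
        then show "t \<in> fst ` K" by force
      qed
      moreover have "z1 - e/2 < z1 + e/2" using e by simp
      ultimately have "K \<inter> graph_of F \<noteq> {}" using hit unfolding hitprop_def by blast
      then obtain y where "y \<in> K" "y \<in> graph_of F" by blast
      moreover have "dist y z < e" using \<open>y \<in> K\<close> e unfolding K_def by (simp add: dist_commute)
      ultimately show ?thesis by blast
    qed
    then show ?thesis unfolding closure_approachable by blast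
  qed
  then show ?thesis by blast
qed

lemma connected_graph:
  fixes F :: "real \<Rightarrow> real"
  assumes hit: "hitprop F"
  shows "connected (graph_of F)"
proof -
  define \<A> where "\<A> = range (\<lambda>n::nat. (\<lambda>x. (x, F x)) ` {- real n - 1<..<real n + 1})"
  have "graph_of F = \<Union>\<A>"
  proof
    show "graph_of F \<subseteq> \<Union>\<A>"
    proof
      fix z assume "z \<in> graph_of F"
      then obtain x where x: "z = (x, F x)" unfolding graph_of_def by blast
      obtain n :: nat where "\<bar>x\<bar> \<le> real n" using real_arch_simple by blast
      then have "x \<in> {- real n - 1<..<real n + 1}" by auto
      then show "z \<in> \<Union>\<A>" unfolding \<A>_def x by blast
    qed
    show "\<Union>\<A> \<subseteq> graph_of F" unfolding \<A>_def graph_of_def by blast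
  qed
  moreover have "connected (\<Union>\<A>)"
  proof (rule connected_Union)
    fix S assume "S \<in> \<A>"
    then obtain n :: nat where "S = (\<lambda>x. (x, F x)) ` {- real n - 1<..<real n + 1}" unfolding \<A>_def by blast
    then show "connected S" using conn_open_interval[OF hit, of "- real n - 1" "real n + 1"] by simp
  next
    have "(0, F 0) \<in> \<Inter>\<A>" unfolding \<A>_def by force
    then show "\<Inter>\<A> \<noteq> {}" by blast
  qed
  ultimately show ?thesis by simp
qed

lemma darboux_from_intervals:
  fixes \<psi> :: "real \<Rightarrow> real"
  assumes inj: "inj \<psi>" and iv: "\<forall>c d. c < d \<longrightarrow> is_interval (\<psi> ` {c<..<d})"
    and ab: "a < b" and v: "min (\<psi> a) (\<psi> b) < v" "v < max (\<psi> a) (\<psi> b)"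
  shows "\<exists>t. a < t \<and> t < b \<and> \<psi> t = v"
proof -
  have get: "\<exists>t. c < t \<and> t < d \<and> \<psi> t = v" if "c < a" "b < d" for c d
  proof -
    have "\<psi> a \<in> \<psi> ` {c<..<d}" "\<psi> b \<in> \<psi> ` {c<..<d}" using that ab by auto
    moreover have I: "is_interval (\<psi> ` {c<..<d})" using iv that ab by simp
    ultimately have "v \<in> \<psi> ` {c<..<d}"
    proof (cases "\<psi> a \<le> \<psi> b")
      case True
      then have "\<psi> a \<le> v" "v \<le> \<psi> b" using v by auto
      then show ?thesis using I \<open>\<psi> a \<in> _\<close> \<open>\<psi> b \<in> _\<close> unfolding is_interval_1 by blast
    next
      case False
      then have "\<psi> b \<le> v" "v \<le> \<psi> a" using v by auto
      then show ?thesis using I \<open>\<psi> a \<in> _\<close> \<open>\<psi> b \<in> _\<close> unfolding is_interval_1 by blast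
    qed
    then show ?thesis by auto
  qed
  obtain t where t: "a - 1 < t" "t < b + 1" "\<psi> t = v" using get[of "a - 1" "b + 1"] by auto
  have "t \<noteq> a" "t \<noteq> b" using t(3) v by auto
  moreover have "\<not> t < a"
  proof
    assume ta: "t < a"
    obtain t' where "t < t'" "t' < b + 1" "\<psi> t' = v" using get[of t "b + 1"] ta by auto
    then show False using t(3) inj by (metis injD less_irrefl)
  qed
  moreover have "\<not> t > b"
  proof
    assume tb: "t > b"
    obtain t' where "a - 1 < t'" "t' < t" "\<psi> t' = v" using get[of "a - 1" t] tb by auto
    then show False using t(3) inj by (metis injD less_irrefl)
  qed
  ultimately show ?thesis using t(3) by (intro exI[of _ t]) auto
qed


lemma no_peak:
  fixes \<psi> :: "real \<Rightarrow> real"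
  assumes inj: "inj \<psi>" and iv: "\<forall>c d. c < d \<longrightarrow> is_interval (\<psi> ` {c<..<d})"
    and abc: "a < b" "b < c"
  shows "\<psi> a < \<psi> b \<longleftrightarrow> \<psi> b < \<psi> c"
proof -
  have ne1: "\<psi> a \<noteq> \<psi> b" using injD[OF inj, of a b] abc by auto
  have ne2: "\<psi> b \<noteq> \<psi> c" using injD[OF inj, of b c] abc by auto
  note ne = ne1 ne2
  note D = darboux_from_intervals[OF inj iv]
  show ?thesis
  proof
    assume ab: "\<psi> a < \<psi> b"
    show "\<psi> b < \<psi> c"
    proof (rule ccontr)
      assume "\<not> \<psi> b < \<psi> c"
      then have cb: "\<psi> c < \<psi> b" using ne by linarith
      define v where "v = (max (\<psi> a) (\<psi> c) + \<psi> b) / 2"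
      have m1: "min (\<psi> a) (\<psi> b) < v" "v < max (\<psi> a) (\<psi> b)" using ab cb unfolding v_def by auto
      have m2: "min (\<psi> b) (\<psi> c) < v" "v < max (\<psi> b) (\<psi> c)" using ab cb unfolding v_def by auto
      obtain s where s: "a < s" "s < b" "\<psi> s = v" using D[OF abc(1) m1] by blast
      obtain t where t: "b < t" "t < c" "\<psi> t = v" using D[OF abc(2) m2] by blast
      show False using s t inj by (metis injD less_trans less_irrefl)
    qed
  next
    assume bc: "\<psi> b < \<psi> c"
    show "\<psi> a < \<psi> b"
    proof (rule ccontr)
      assume "\<not> \<psi> a < \<psi> b"
      then have ba: "\<psi> b < \<psi> a" using ne by linarith
      define v where "v = (min (\<psi> a) (\<psi> c) + \<psi> b) / 2"
      have m1: "min (\<psi> a) (\<psi> b) < v" "v < max (\<psi> a) (\<psi> b)" using ba bc unfolding v_def by auto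
      have m2: "min (\<psi> b) (\<psi> c) < v" "v < max (\<psi> b) (\<psi> c)" using ba bc unfolding v_def by auto
      obtain s where s: "a < s" "s < b" "\<psi> s = v" using D[OF abc(1) m1] by blast
      obtain t where t: "b < t" "t < c" "\<psi> t = v" using D[OF abc(2) m2] by blast
      show False using s t inj by (metis injD less_trans less_irrefl)
    qed
  qed
qed

lemma mono_cases:
  fixes \<psi> :: "real \<Rightarrow> real"
  assumes inj: "inj \<psi>" and iv: "\<forall>c d. c < d \<longrightarrow> is_interval (\<psi> ` {c<..<d})"
  shows "(\<forall>x y. x < y \<longrightarrow> \<psi> x < \<psi> y) \<or> (\<forall>x y. x < y \<longrightarrow> \<psi> y < \<psi> x)"
proof -
  note NP = no_peak[OF inj iv]
  have trip: "(\<psi> a < \<psi> b) = (\<psi> a < \<psi> c) \<and> (\<psi> b < \<psi> c) = (\<psi> a < \<psi> c)" if "a < b" "b < c" for a b c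
    using NP[OF that] inj that by (metis injD less_irrefl less_trans not_less_iff_gr_or_eq)
  have toLR: "(\<psi> x < \<psi> y) = (\<psi> L < \<psi> R)" if "L < x" "x < y" "y < R" for x y L R
  proof -
    have "(\<psi> x < \<psi> y) = (\<psi> L < \<psi> y)" using trip[OF that(1,2)] by blast
    also have "\<dots> = (\<psi> L < \<psi> R)" using trip[of L y R] that by linarith
    finally show ?thesis .
  qed
  have same: "(\<psi> x < \<psi> y) = (\<psi> 0 < \<psi> 1)" if "x < y" for x y
  proof -
    define L where "L = min x 0 - 1"
    define R where "R = max y 1 + 1"
    have "(\<psi> x < \<psi> y) = (\<psi> L < \<psi> R)" using toLR[of L x y R] that unfolding L_def R_def by auto
    also have "\<dots> = (\<psi> 0 < \<psi> 1)" using toLR[of L 0 1 R] unfolding L_def R_def by auto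
    finally show ?thesis .
  qed
  show ?thesis
  proof (cases "\<psi> 0 < \<psi> 1")
    case True
    then show ?thesis using same by blast
  next
    case False
    have "\<psi> y < \<psi> x" if "x < y" for x y
    proof -
      have "\<psi> x \<noteq> \<psi> y" using injD[OF inj, of x y] that by auto
      then show ?thesis using same[OF that] False by linarith
    qed
    then show ?thesis by blast
  qed
qed

lemma cont_incr:
  fixes \<psi> :: "real \<Rightarrow> real"
  assumes mono: "\<And>x y. x < y \<Longrightarrow> \<psi> x < \<psi> y"
    and darb: "\<And>a b v. a < b \<Longrightarrow> \<psi> a < v \<Longrightarrow> v < \<psi> b \<Longrightarrow> \<exists>t. a < t \<and> t < b \<and> \<psi> t = v"
  shows "continuous_on UNIV \<psi>"
  unfolding continuous_on_iff
proof (intro ballI allI impI)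
  fix x0 e :: real assume e: "e > 0"
  obtain s where s: "s < x0" "\<psi> x0 - e \<le> \<psi> s"
  proof (cases "\<psi> x0 - e \<le> \<psi> (x0 - 1)")
    case True then show ?thesis using that[of "x0 - 1"] by simp
  next
    case False
    then obtain t where "x0 - 1 < t" "t < x0" "\<psi> t = \<psi> x0 - e" using darb[of "x0 - 1" x0 "\<psi> x0 - e"] e by auto
    then show ?thesis using that[of t] by simp
  qed
  obtain t where t: "x0 < t" "\<psi> t \<le> \<psi> x0 + e"
  proof (cases "\<psi> (x0 + 1) \<le> \<psi> x0 + e")
    case True then show ?thesis using that[of "x0 + 1"] by simp
  next
    case False
    then obtain t where "x0 < t" "t < x0 + 1" "\<psi> t = \<psi> x0 + e" using darb[of x0 "x0 + 1" "\<psi> x0 + e"] e by auto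
    then show ?thesis using that[of t] by simp
  qed
  define d where "d = min (x0 - s) (t - x0)"
  have "d > 0" unfolding d_def using s t by simp
  moreover have "dist (\<psi> x') (\<psi> x0) < e" if "dist x' x0 < d" for x'
  proof -
    have "s < x'" "x' < t" using that unfolding d_def dist_real_def by auto
    then have "\<psi> s < \<psi> x'" "\<psi> x' < \<psi> t" using mono by auto
    then show ?thesis using s t unfolding dist_real_def by auto
  qed
  ultimately show "\<exists>d>0. \<forall>x'\<in>UNIV. dist x' x0 < d \<longrightarrow> dist (\<psi> x') (\<psi> x0) < e" by blast
qed

lemma psi_cont:
  fixes \<psi> :: "real \<Rightarrow> real"
  assumes inj: "inj \<psi>" and iv: "\<forall>c d. c < d \<longrightarrow> is_interval (\<psi> ` {c<..<d})"
  shows "continuous_on UNIV \<psi>"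
proof -
  note D = darboux_from_intervals[OF inj iv]
  consider "\<forall>x y. x < y \<longrightarrow> \<psi> x < \<psi> y" | "\<forall>x y. x < y \<longrightarrow> \<psi> y < \<psi> x"
    using mono_cases[OF inj iv] by blast
  then show ?thesis
  proof cases
    case 1
    show ?thesis
    proof (rule cont_incr)
      show "\<psi> x < \<psi> y" if "x < y" for x y using 1 that by blast
      show "\<exists>t. a < t \<and> t < b \<and> \<psi> t = v" if h: "a < b" "\<psi> a < v" "v < \<psi> b" for a b v
      proof -
        have "min (\<psi> a) (\<psi> b) < v" "v < max (\<psi> a) (\<psi> b)" using h by auto
        then show ?thesis using D[OF h(1)] by blast
      qed
    qed
  next
    case 2
    have "continuous_on UNIV (\<lambda>x. - \<psi> x)"
    proof (rule cont_incr)
      show "- \<psi> x < - \<psi> y" if "x < y" for x y using 2 that by auto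
      show "\<exists>t. a < t \<and> t < b \<and> - \<psi> t = v" if h: "a < b" "- \<psi> a < v" "v < - \<psi> b" for a b v
      proof -
        have "min (\<psi> a) (\<psi> b) < - v" "- v < max (\<psi> a) (\<psi> b)" using h by auto
        then obtain t where "a < t" "t < b" "\<psi> t = - v" using D[OF h(1)] by blast
        then show ?thesis by auto
      qed
    qed
    then have "continuous_on UNIV (\<lambda>x. - (- \<psi> x))" by (rule continuous_on_minus)
    then show ?thesis by simp
  qed
qed


theorem corollary3:
  shows "\<exists>F :: real \<Rightarrow> real.
           connected (graph_of F) \<and>
           closure (graph_of F) = UNIV \<and>
           (\<forall>S. S \<subset> graph_of F \<longrightarrow> \<not> (graph_of F homeomorphic S))"
proof -
  obtain F :: "real \<Rightarrow> real" where hit: "hitprop F" and kill: "killprop F" using exists_F by blast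
  have rigid: "\<not> (graph_of F homeomorphic S)" if SG: "S \<subset> graph_of F" for S
  proof
    assume "graph_of F homeomorphic S"
    then obtain h k where hk: "homeomorphism (graph_of F) S h k" unfolding homeomorphic_def by blast
    note H = hk[unfolded homeomorphism_def]
    have inG: "(x, F x) \<in> graph_of F" for x unfolding graph_of_def by blast
    define \<psi> where "\<psi> x = fst (h (x, F x))" for x
    have hval: "h (x, F x) = (\<psi> x, F (\<psi> x))" for x
    proof -
      have "h (x, F x) \<in> S" using H inG[of x] by blast
      then have "h (x, F x) \<in> graph_of F" using SG by blast
      then obtain y where "h (x, F x) = (y, F y)" unfolding graph_of_def by blast
      then show ?thesis unfolding \<psi>_def by simp
    qed
    have inj: "inj \<psi>"
    proof (rule injI)
      fix x y assume "\<psi> x = \<psi> y"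
      then have "h (x, F x) = h (y, F y)" using hval by simp
      then have "k (h (x, F x)) = k (h (y, F y))" by simp
      then have "(x, F x) = (y, F y)" using H inG by metis
      then show "x = y" by simp
    qed
    have nid: "\<psi> \<noteq> id"
    proof
      assume pid: "\<psi> = id"
      obtain z where z: "z \<in> graph_of F" "z \<notin> S" using SG by blast
      then obtain w where w: "z = (w, F w)" unfolding graph_of_def by blast
      have "h (w, F w) = z" using hval[of w] pid w by simp
      moreover have "h (w, F w) \<in> S" using H inG[of w] by blast
      ultimately show False using z by simp
    qed
    have iv: "\<forall>c d. c < d \<longrightarrow> is_interval (\<psi> ` {c<..<d})"
    proof (intro allI impI)
      fix c d :: real assume cd: "c < d"
      have sub: "(\<lambda>x. (x, F x)) ` {c<..<d} \<subseteq> graph_of F" using inG by blast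
      have "connected (h ` ((\<lambda>x. (x, F x)) ` {c<..<d}))"
        using connected_continuous_image[OF continuous_on_subset[OF homeomorphism_cont1[OF hk] sub] conn_open_interval[OF hit cd]] .
      moreover have cf: "continuous_on UNIV (fst :: real \<times> real \<Rightarrow> real)"
        using continuous_on_fst[OF continuous_on_id] by simp
      ultimately have "connected (fst ` h ` ((\<lambda>x. (x, F x)) ` {c<..<d}))"
        using connected_continuous_image[OF continuous_on_subset[OF cf subset_UNIV]] by blast
      moreover have "fst ` h ` ((\<lambda>x. (x, F x)) ` {c<..<d}) = \<psi> ` {c<..<d}"
        unfolding \<psi>_def by (simp add: image_image)
      ultimately show "is_interval (\<psi> ` {c<..<d})" by (simp add: is_interval_connected_1)
    qed
    have cont: "continuous_on UNIV \<psi>" using psi_cont[OF inj iv] .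
    obtain x0 xs where xs: "xs \<longlonglongrightarrow> x0" "F x0 = 0" "F (\<psi> x0) = 0"
      "\<And>n. F (xs n) = 0" "\<And>n. F (\<psi> (xs n)) = 1"
      using kill cont inj nid unfolding killprop_def by blast
    have "(\<lambda>n. (xs n, F (xs n))) \<longlonglongrightarrow> (x0, F x0)"
      using tendsto_Pair[OF xs(1) tendsto_const[of 0]] xs(2,4) by simp
    then have "(\<lambda>n. h (xs n, F (xs n))) \<longlonglongrightarrow> h (x0, F x0)"
      by (rule continuous_on_tendsto_compose[OF homeomorphism_cont1[OF hk] _ inG]) (simp add: inG)
    then have "(\<lambda>n. snd (h (xs n, F (xs n)))) \<longlonglongrightarrow> snd (h (x0, F x0))"
      by (rule tendsto_snd)
    then have "(\<lambda>n. 1::real) \<longlonglongrightarrow> 0" using hval xs(3,5) by simp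
    then show False using LIMSEQ_unique[OF tendsto_const] by fastforce
  qed
  show ?thesis using connected_graph[OF hit] dense_graph[OF hit] rigid by blast
qed

end
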